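(* For every strictly balanced graph $H$ and every positive integer $N$, w.h.p. the first $N$ copies of $H$ which appear in the random graph process on $[n]$ are pairwise vertex disjoint.
   Context: For a graph $F$, $d(F)=e(F)/v(F)$; $F$ is strictly balanced if $d(F)>d(F')$ for every proper subgraph $F'\subsetneq F$. The random graph process on $[n]$ adds the edges of $K_n$ one by one in a uniformly random order, producing graphs $G_0\subseteq G_1\subseteq\dots\subseteq G_{\binom n2}$. "W.h.p." means with probability tending to 1 as $n\to\infty$. *)

theory Defs
  imports "HOL-Probability.Probability"
begin

definition is_graph :: "'a set \<Rightarrow> 'a set set \<Rightarrow> bool" where
  "is_graph V E \<longleftrightarrow> finite V \<and> (\<forall>e\<in>E. e \<subseteq> V \<and> card e = 2)"

definition density :: "'a set \<Rightarrow> 'a set set \<Rightarrow> real" where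
  "density V E = real (card E) / real (card V)"

text \<open>Strictly balanced: d(H) > d(F) for every proper subgraph F of H
  (subgraphs with at least one vertex, so that d(F) is defined).\<close>
definition strictly_balanced :: "'a set \<Rightarrow> 'a set set \<Rightarrow> bool" where
  "strictly_balanced V E \<longleftrightarrow> is_graph V E \<and> V \<noteq> {} \<and>
     (\<forall>V' E'. V' \<subseteq> V \<and> E' \<subseteq> E \<and> (\<forall>e\<in>E'. e \<subseteq> V') \<and> V' \<noteq> {}
        \<and> (V', E') \<noteq> (V, E) \<longrightarrow> density V' E' < density V E)"

text \<open>Edges of the complete graph K_n on the vertex set [n] = {0,...,n-1}.\<close>
definition Kn_edges :: "nat \<Rightarrow> nat set set" where
  "Kn_edges n = {e. e \<subseteq> {..<n} \<and> card e = 2}"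

text \<open>Orderings of the edges of K_n; the random graph process is the uniform
  distribution on these, and G_t consists of the first t edges.\<close>
definition edge_orderings :: "nat \<Rightarrow> nat set list set" where
  "edge_orderings n = {xs. distinct xs \<and> set xs = Kn_edges n}"

definition graph_process :: "nat \<Rightarrow> nat set list pmf" where
  "graph_process n = pmf_of_set (edge_orderings n)"

definition graph_at :: "nat set list \<Rightarrow> nat \<Rightarrow> nat set set" where
  "graph_at xs t = set (take t xs)"

definition copies :: "'a set \<Rightarrow> 'a set set \<Rightarrow> nat \<Rightarrow> nat set set \<Rightarrow> (nat set \<times> nat set set) set" where
  "copies V E n G = {(V', E'). \<exists>f. inj_on f V \<and> f ` V \<subseteq> {..<n} \<and> V' = f ` V
        \<and> E' = (\<lambda>e. f ` e) ` E \<and> E' \<subseteq> G}"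

text \<open>The event that the first N copies of H appearing in the process xs are pairwise
  vertex disjoint: at least N copies appear eventually, and at every time t up to
  (and including) the step at which the N-th copy appears, all copies present in G_t
  are pairwise vertex disjoint.\<close>
definition first_copies_disjoint ::
    "'a set \<Rightarrow> 'a set set \<Rightarrow> nat \<Rightarrow> nat \<Rightarrow> nat set list \<Rightarrow> bool" where
  "first_copies_disjoint V E N n xs \<longleftrightarrow>
     N \<le> card (copies V E n (graph_at xs (length xs))) \<and>
     (\<forall>t \<le> length xs. (t = 0 \<or> card (copies V E n (graph_at xs (t - 1))) < N) \<longrightarrow>
        (\<forall>C \<in> copies V E n (graph_at xs t). \<forall>D \<in> copies V E n (graph_at xs t).
            C \<noteq> D \<longrightarrow> fst C \<inter> fst D = {}))"

end

theory Submission
  imports Defs "HOL-Combinatorics.Multiset_Permutations"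
begin

lemma fiber_eq:
  assumes "finite A" "U \<subseteq> A" "card U = m"
  shows "{xs \<in> permutations_of_set A. set (take m xs) = U} =
     (\<lambda>(ys,zs). ys @ zs) ` (permutations_of_set U \<times> permutations_of_set (A - U))"
proof (intro equalityI subsetI)
  fix xs assume "xs \<in> {xs \<in> permutations_of_set A. set (take m xs) = U}"
  hence xs: "set xs = A" "distinct xs" "set (take m xs) = U"
    by (auto simp: permutations_of_set_def)
  have tk: "take m xs \<in> permutations_of_set U"
    using xs by (auto simp: permutations_of_set_def)
  have dr: "drop m xs \<in> permutations_of_set (A - U)"
  proof -
    have d: "distinct (take m xs @ drop m xs)" using xs by simp
    have u: "set (take m xs) \<union> set (drop m xs) = A"
      using xs(1) by (metis set_append append_take_drop_id)
    have "set (take m xs) \<inter> set (drop m xs) = {}" using d by (simp only: distinct_append)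
      hence "set (drop m xs) = A - U"
      using u xs(3) by blast
    thus ?thesis using d by (intro permutations_of_setI) auto
  qed
  have "(take m xs, drop m xs) \<in> permutations_of_set U \<times> permutations_of_set (A - U)"
    using tk dr by blast
  moreover have "xs = (\<lambda>(ys,zs). ys @ zs) (take m xs, drop m xs)" by simp
  ultimately show "xs \<in> (\<lambda>(ys,zs). ys @ zs) ` (permutations_of_set U \<times> permutations_of_set (A - U))"
    by (rule rev_image_eqI)
next
  fix xs assume "xs \<in> (\<lambda>(ys,zs). ys @ zs) ` (permutations_of_set U \<times> permutations_of_set (A - U))"
  then obtain p where p: "p \<in> permutations_of_set U \<times> permutations_of_set (A - U)"
      "xs = (\<lambda>(ys,zs). ys @ zs) p" by (rule imageE)
  obtain ys zs where xs: "xs = ys @ zs" and ys: "ys \<in> permutations_of_set U"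
     and zs: "zs \<in> permutations_of_set (A - U)"
    using p by (cases p) simp
  have ys': "set ys = U" "distinct ys" and zs': "set zs = A - U" "distinct zs"
    using ys zs by (auto simp: permutations_of_set_def)
  have "length ys = m" using ys' assms distinct_card by metis
  hence "take m xs = ys" using xs by simp
  moreover have "set xs = A" using xs ys' zs' assms(2) by auto
  moreover have "distinct xs" using xs ys' zs' by auto
  ultimately show "xs \<in> {xs \<in> permutations_of_set A. set (take m xs) = U}"
    using ys' by (auto simp: permutations_of_set_def)
qed

lemma fiber_card:
  assumes "finite A" "U \<subseteq> A" "card U = m"
  shows "card {xs \<in> permutations_of_set A. set (take m xs) = U} = fact m * fact (card A - m)"
proof -
  have inj: "inj_on (\<lambda>(ys,zs). ys @ zs) (permutations_of_set U \<times> permutations_of_set (A - U))"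
  proof (rule inj_onI, clarsimp)
    fix ys zs ys' zs' assume "ys \<in> permutations_of_set U" "ys' \<in> permutations_of_set U"
      "ys @ zs = ys' @ zs'"
    moreover have "length ys = length ys'" using calculation
      by (simp add: length_finite_permutations_of_set)
    ultimately show "ys = ys' \<and> zs = zs'" by simp
  qed
  have fU: "finite U" using assms finite_subset by blast
  show ?thesis
    unfolding fiber_eq[OF assms] card_image[OF inj]
    using assms fU by (simp add: card_cartesian_product card_Diff_subset)
qed


fun gq :: "nat \<Rightarrow> nat \<Rightarrow> nat \<Rightarrow> real" where
  "gq M m 0 = 1"
| "gq M m (Suc k) = gq M m k * (real m - real k) / (real M - real k)"

lemma gq_fact:
  assumes "k \<le> m" "m \<le> M"
  shows "gq M m k * fact M * fact (m - k) = fact m * fact (M - k)"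
  using assms(1)
proof (induction k)
  case 0 thus ?case by simp
next
  case (Suc k)
  hence IH: "gq M m k * fact M * fact (m - k) = fact m * fact (M - k)" by simp
  have f1: "(fact (m - k) :: real) = (real m - real k) * fact (m - Suc k)"
    using Suc.prems fact_reduce[of "m - k", where 'a=real] by (simp add: of_nat_diff)
  have f2: "(fact (M - k) :: real) = (real M - real k) * fact (M - Suc k)"
    using Suc.prems assms(2) fact_reduce[of "M - k", where 'a=real] by (simp add: of_nat_diff)
  have pos: "real M - real k > 0" using Suc.prems assms(2) by simp
  have "gq M m (Suc k) * fact M * fact (m - Suc k)
        = (gq M m k * fact M * ((real m - real k) * fact (m - Suc k))) / (real M - real k)"
    by (simp add: field_simps)
  also have "\<dots> = fact m * fact (M - k) / (real M - real k)" using IH f1 by simp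
  also have "\<dots> = fact m * fact (M - Suc k)" using f2 pos by simp
  finally show ?case .
qed

lemma gq_zero: "m < k \<Longrightarrow> gq M m k = 0"
proof (induction k)
  case 0 thus ?case by simp
next
  case (Suc k)
  show ?case
  proof (cases "m < k")
    case True thus ?thesis using Suc by simp
  next
    case False hence "k = m" using Suc.prems by simp
    thus ?thesis by simp
  qed
qed

lemma card_take_perm:
  assumes "xs \<in> permutations_of_set A" "m \<le> card A"
  shows "card (set (take m xs)) = m"
proof -
  have "distinct xs" "length xs = card A" using assms(1)
    by (auto dest: permutations_of_setD simp: length_finite_permutations_of_set)
  thus ?thesis using assms(2) by (simp add: distinct_card)
qed

lemma perm_subset_card:
  assumes A: "finite A" and S: "S \<subseteq> A" "card S = k" and m: "m \<le> card A"
  shows "real (card {xs \<in> permutations_of_set A. S \<subseteq> set (take m xs)}) = fact (card A) * gq (card A) m k"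
proof -
  define Us where "Us = {U. U \<subseteq> A \<and> card U = m \<and> S \<subseteq> U}"
  have finUs: "finite Us" unfolding Us_def using A by (auto intro: finite_subset[of _ "Pow A"])
  have eq: "{xs \<in> permutations_of_set A. S \<subseteq> set (take m xs)} =
      (\<Union>U\<in>Us. {xs \<in> permutations_of_set A. set (take m xs) = U})"
  proof (intro equalityI subsetI)
    fix xs assume xs: "xs \<in> {xs \<in> permutations_of_set A. S \<subseteq> set (take m xs)}"
    hence "set (take m xs) \<in> Us" unfolding Us_def
      using card_take_perm[OF _ m] by (auto dest!: permutations_of_setD(1) dest: in_set_takeD)
    thus "xs \<in> (\<Union>U\<in>Us. {xs \<in> permutations_of_set A. set (take m xs) = U})" using xs by blast
  next
    fix xs assume "xs \<in> (\<Union>U\<in>Us. {xs \<in> permutations_of_set A. set (take m xs) = U})"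
    thus "xs \<in> {xs \<in> permutations_of_set A. S \<subseteq> set (take m xs)}" unfolding Us_def by blast
  qed
  have "card {xs \<in> permutations_of_set A. S \<subseteq> set (take m xs)} =
      (\<Sum>U\<in>Us. card {xs \<in> permutations_of_set A. set (take m xs) = U})"
    unfolding eq by (rule card_UN_disjoint) (auto simp: finUs)
  also have "\<dots> = (\<Sum>U\<in>Us. fact m * fact (card A - m))"
    by (rule sum.cong) (auto simp: Us_def intro!: fiber_card A)
  also have "\<dots> = card Us * (fact m * fact (card A - m))" by simp
  finally have c: "card {xs \<in> permutations_of_set A. S \<subseteq> set (take m xs)} = card Us * (fact m * fact (card A - m))" .
  show ?thesis
  proof (cases "k \<le> m")
    case False
    hence "Us = {}" unfolding Us_def using S A by (auto dest: card_mono[OF finite_subset])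
    thus ?thesis using c gq_zero[of m k] False by simp
  next
    case True
    have fS: "finite S" using S A finite_subset by blast
    have "Us = (\<lambda>T. T \<union> S) ` {T. T \<subseteq> A - S \<and> card T = m - k}"
    proof (intro equalityI subsetI)
      fix U assume "U \<in> Us"
      hence U: "U \<subseteq> A" "card U = m" "S \<subseteq> U" unfolding Us_def by auto
      have "card (U - S) = m - k" using U S fS by (simp add: card_Diff_subset)
      moreover have "U = (U - S) \<union> S" using U by blast
      ultimately show "U \<in> (\<lambda>T. T \<union> S) ` {T. T \<subseteq> A - S \<and> card T = m - k}"
        using U by blast
    next
      fix U assume "U \<in> (\<lambda>T. T \<union> S) ` {T. T \<subseteq> A - S \<and> card T = m - k}"
      then obtain T where T: "T \<subseteq> A - S" "card T = m - k" "U = T \<union> S" by blast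
      have "finite T" using T A finite_subset by blast
      moreover have "T \<inter> S = {}" using T by blast
      ultimately have "card U = card T + card S" using T fS by (simp add: card_Un_disjoint)
      hence "card U = m" using T S True by simp
      thus "U \<in> Us" using T S unfolding Us_def by blast
    qed
    moreover have "inj_on (\<lambda>T. T \<union> S) {T. T \<subseteq> A - S \<and> card T = m - k}"
      by (rule inj_onI) blast
    ultimately have "card Us = (card A - k) choose (m - k)"
      using n_subsets[of "A - S" "m - k"] A S fS by (simp add: card_image card_Diff_subset)
    hence cU: "card Us * fact (m - k) * fact (card A - m) = fact (card A - k)"
      using binomial_fact_lemma[of "m - k" "card A - k"] True m by (simp add: ac_simps)
    have "card {xs \<in> permutations_of_set A. S \<subseteq> set (take m xs)} * fact (m - k)
        = card Us * (fact m * fact (card A - m)) * fact (m - k)" using c by simp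
    also have "\<dots> = fact m * (card Us * fact (m - k) * fact (card A - m))" by (simp add: ac_simps)
    also have "\<dots> = fact m * fact (card A - k)" using cU by simp
    finally have "real (card {xs \<in> permutations_of_set A. S \<subseteq> set (take m xs)} * fact (m - k))
        = real (fact m * fact (card A - k))" by (simp only:)
    hence "real (card {xs \<in> permutations_of_set A. S \<subseteq> set (take m xs)}) * fact (m - k)
        = fact m * fact (card A - k)" by (simp only: of_nat_mult of_nat_fact)
    also have "\<dots> = gq (card A) m k * fact (card A) * fact (m - k)"
      using gq_fact[OF True m] by simp
    finally show ?thesis by simp
  qed
qed

lemma l1: "(m::nat) \<le> M \<Longrightarrow> (real m - real k) * real M \<le> real m * (real M - real k)"
proof -
  assume a: "m \<le> M"
  have "(real m - real k) * real M - real m * (real M - real k) = real k * (real m - real M)" by (simp add: algebra_simps)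
  moreover have "real k * (real m - real M) \<le> 0" using a by (simp add: mult_nonneg_nonpos)
  ultimately show ?thesis by linarith
qed
lemma l2: "(m::nat) \<le> M \<Longrightarrow> (real m - real (a+b)) * (real M - real b) \<le> (real m - real b) * (real M - real (a+b))"
proof -
  assume h: "m \<le> M"
  have "(real m - real (a+b)) * (real M - real b) - (real m - real b) * (real M - real (a+b)) = real a * (real m - real M)" by (simp add: algebra_simps)
  moreover have "real a * (real m - real M) \<le> 0" using h by (simp add: mult_nonneg_nonpos)
  ultimately show ?thesis by linarith
qed

lemma gq_nonneg: "m \<le> M \<Longrightarrow> 0 \<le> gq M m k"
proof (induction k)
  case 0 thus ?case by simp
next
  case (Suc k)
  show ?case
  proof (cases "k < m")
    case True
    hence "real m - real k \<ge> 0" "real M - real k > 0" using Suc.prems by auto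
    thus ?thesis using Suc by simp
  next
    case False
    have "gq M m (Suc k) = 0" by (rule gq_zero) (use False in simp)
    thus ?thesis by (metis order_refl zero_le_power divide_nonneg_nonneg of_nat_0_le_iff)
  qed
qed

lemma gq_le_pow: "m \<le> M \<Longrightarrow> gq M m k \<le> (real m / real M) ^ k"
proof (induction k)
  case 0 thus ?case by simp
next
  case (Suc k)
  show ?case
  proof (cases "k < m")
    case True
    have p: "real m - real k \<ge> 0" "real M - real k > 0" using True Suc.prems by auto
    have "(real m - real k) * real M \<le> real m * (real M - real k)"
      using Suc.prems by (rule l1)
    hence r: "(real m - real k) / (real M - real k) \<le> real m / real M"
      using p True Suc.prems by (simp add: divide_simps)
    have "gq M m (Suc k) = gq M m k * ((real m - real k) / (real M - real k))" by simp
    also have "\<dots> \<le> (real m / real M) ^ k * (real m / real M)"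
      using Suc gq_nonneg[OF Suc.prems, of k] p r by (intro mult_mono) auto
    finally show ?thesis by (simp add: ac_simps)
  next
    case False
    have "gq M m (Suc k) = 0" by (rule gq_zero) (use False in simp)
    thus ?thesis by (metis order_refl zero_le_power divide_nonneg_nonneg of_nat_0_le_iff)
  qed
qed

lemma gq_add: "m \<le> M \<Longrightarrow> gq M m (a + b) \<le> gq M m a * gq M m b"
proof (induction b)
  case 0 thus ?case by simp
next
  case (Suc b)
  have nn: "0 \<le> gq M m a" "0 \<le> gq M m b" "0 \<le> gq M m (a + b)" "0 \<le> gq M m (Suc b)"
    by (rule gq_nonneg[OF Suc.prems])+
  show ?case
  proof (cases "a + b < m")
    case True
    have p: "real m - real (a + b) \<ge> 0" "real M - real (a+b) > 0" "real M - real b > 0"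
      using True Suc.prems by auto
    have "(real m - real (a+b)) * (real M - real b) \<le> (real m - real b) * (real M - real (a+b))"
      using Suc.prems by (rule l2)
    hence r: "(real m - real (a+b)) / (real M - real (a+b)) \<le> (real m - real b) / (real M - real b)"
      using p by (simp add: divide_simps)
    have "gq M m (a + Suc b) = gq M m (a + b) * ((real m - real (a+b)) / (real M - real (a+b)))"
      by simp
    also have "\<dots> \<le> (gq M m a * gq M m b) * ((real m - real b) / (real M - real b))"
      using Suc nn p r by (intro mult_mono) auto
    also have "\<dots> = gq M m a * gq M m (Suc b)" by simp
    finally show ?thesis .
  next
    case False
    have "gq M m (a + Suc b) = 0" by (rule gq_zero) (use False in simp)
    thus ?thesis using nn by (metis mult_nonneg_nonneg)
  qed
qed

lemma gq_lower: "k \<le> m \<Longrightarrow> m \<le> M \<Longrightarrow> ((real m - real k) / real M) ^ k \<le> gq M m k"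
proof (induction k)
  case 0 thus ?case by simp
next
  case (Suc k)
  have p: "real m - real k - 1 \<ge> 0" "real M - real k > 0" "real M > 0" using Suc.prems by auto
  have IH: "((real m - real k) / real M) ^ k \<le> gq M m k" using Suc by simp
  have "((real m - real (Suc k)) / real M) ^ Suc k
      = ((real m - real k - 1) / real M) ^ k * ((real m - real k - 1) / real M)" by (simp add: algebra_simps)
  also have "\<dots> \<le> ((real m - real k) / real M) ^ k * ((real m - real k) / (real M - real k))"
  proof (intro mult_mono power_mono)
    show "(real m - real k - 1) / real M \<le> (real m - real k) / real M" using p by (simp add: divide_simps)
    show "(real m - real k - 1) / real M \<le> (real m - real k) / (real M - real k)"
      using p by (intro frac_le) auto
  qed (use p in auto)
  also have "\<dots> \<le> gq M m k * ((real m - real k) / (real M - real k))"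
    using IH p by (intro mult_right_mono) auto
  finally show ?case by simp
qed

definition Inj :: "'a set \<Rightarrow> nat \<Rightarrow> ('a \<Rightarrow> nat) set" where
  "Inj V n = {f \<in> V \<rightarrow>\<^sub>E {..<n}. inj_on f V}"

definition cp :: "'a set \<Rightarrow> 'a set set \<Rightarrow> ('a \<Rightarrow> nat) \<Rightarrow> nat set \<times> nat set set" where
  "cp V E f = (f ` V, (\<lambda>e. f ` e) ` E)"

lemma finite_Inj: "finite V \<Longrightarrow> finite (Inj V n)"
  unfolding Inj_def by (rule finite_subset[of _ "V \<rightarrow>\<^sub>E {..<n}"]) (auto intro: finite_PiE)

lemma copies_eq:
  assumes "\<forall>e\<in>E. e \<subseteq> V"
  shows "copies V E n G = {C \<in> cp V E ` Inj V n. snd C \<subseteq> G}"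
proof (intro equalityI subsetI)
  fix C assume "C \<in> copies V E n G"
  then obtain f where f: "inj_on f V" "f ` V \<subseteq> {..<n}" "C = (f ` V, (\<lambda>e. f ` e) ` E)"
    "(\<lambda>e. f ` e) ` E \<subseteq> G" unfolding copies_def by blast
  define f' where "f' = restrict f V"
  have "f' \<in> Inj V n" unfolding Inj_def f'_def using f(1,2)
    by (auto simp: inj_on_def)
  moreover have "cp V E f' = C"
  proof -
    have "f' ` V = f ` V" unfolding f'_def by auto
    moreover have "(\<lambda>e. f' ` e) ` E = (\<lambda>e. f ` e) ` E"
    proof (rule image_cong[OF refl])
      fix e assume "e \<in> E" hence "e \<subseteq> V" using assms by blast
      thus "f' ` e = f ` e" unfolding f'_def by auto
    qed
    ultimately show ?thesis unfolding cp_def f(3) by simp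
  qed
  ultimately have "C \<in> cp V E ` Inj V n" by (metis image_eqI)
  thus "C \<in> {C \<in> cp V E ` Inj V n. snd C \<subseteq> G}" using f(3,4) by auto
next
  fix C assume "C \<in> {C \<in> cp V E ` Inj V n. snd C \<subseteq> G}"
  then obtain f where f: "f \<in> Inj V n" "C = cp V E f" "snd C \<subseteq> G" by blast
  hence "inj_on f V" "f ` V \<subseteq> {..<n}" unfolding Inj_def by (auto simp: PiE_def)
  thus "C \<in> copies V E n G" unfolding copies_def using f unfolding cp_def by auto
qed

lemma card_snd_cp:
  assumes "\<forall>e\<in>E. e \<subseteq> V" "f \<in> Inj V n"
  shows "card (snd (cp V E f)) = card E"
proof -
  have "inj_on f V" using assms(2) unfolding Inj_def by blast
  hence "inj_on (\<lambda>e. f ` e) E" using assms(1) unfolding inj_on_def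
    by (meson inj_on_image_eq_iff inj_onI)
  thus ?thesis unfolding cp_def by (simp add: card_image)
qed

lemma card_fst_cp:
  assumes "f \<in> Inj V n"
  shows "card (fst (cp V E f)) = card V"
  using assms unfolding Inj_def cp_def by (simp add: card_image)

lemma snd_cp_Kn:
  assumes "is_graph V E" "f \<in> Inj V n"
  shows "snd (cp V E f) \<subseteq> Kn_edges n"
proof
  fix x assume "x \<in> snd (cp V E f)"
  then obtain e where e: "e \<in> E" "x = f ` e" unfolding cp_def by auto
  have ev: "e \<subseteq> V" "card e = 2" using assms(1) e unfolding is_graph_def by auto
  have f: "inj_on f V" "f \<in> V \<rightarrow>\<^sub>E {..<n}" using assms(2) unfolding Inj_def by auto
  have "card x = 2" using e ev f by (simp add: card_image inj_on_subset)
  moreover have "x \<subseteq> {..<n}" using e ev f by auto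
  ultimately show "x \<in> Kn_edges n" unfolding Kn_edges_def by simp
qed

lemma disjoint_edges:
  assumes "is_graph V E" "fst C \<inter> fst D = {}" "C \<in> cp V E ` Inj V n" "D \<in> cp V E ` Inj V n"
  shows "snd C \<inter> snd D = {}"
proof (rule ccontr)
  assume "snd C \<inter> snd D \<noteq> {}"
  then obtain x where x: "x \<in> snd C" "x \<in> snd D" by blast
  obtain f g where fg: "C = cp V E f" "D = cp V E g" using assms(3,4) by blast
  obtain e1 where e1: "e1 \<in> E" "x = f ` e1" using x fg unfolding cp_def by auto
  obtain e2 where e2: "e2 \<in> E" "x = g ` e2" using x fg unfolding cp_def by auto
  have "e1 \<subseteq> V" "card e1 = 2" "e2 \<subseteq> V" using assms(1) e1 e2 unfolding is_graph_def by auto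
  then obtain a where "a \<in> e1" by fastforce
  hence "f a \<in> x" using e1 by blast
  moreover have "x \<subseteq> g ` V" using e2 \<open>e2 \<subseteq> V\<close> by auto
  ultimately have "f a \<in> fst C \<inter> fst D" using e1 e2 fg \<open>a \<in> e1\<close> \<open>e1 \<subseteq> V\<close> \<open>e2 \<subseteq> V\<close> unfolding cp_def by auto
  thus False using assms(2) by blast
qed

lemma sb_graph: "strictly_balanced V E \<Longrightarrow> is_graph V E"
  and sb_finite: "strictly_balanced V E \<Longrightarrow> finite V"
  and sb_ne: "strictly_balanced V E \<Longrightarrow> V \<noteq> {}"
  and sb_edges: "strictly_balanced V E \<Longrightarrow> \<forall>e\<in>E. e \<subseteq> V"
  unfolding strictly_balanced_def is_graph_def by auto

lemma sb_dens:
  assumes "strictly_balanced V E" "V' \<subseteq> V" "E' \<subseteq> E" "\<forall>e\<in>E'. e \<subseteq> V'" "V' \<noteq> {}"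
    "(V', E') \<noteq> (V, E)"
  shows "density V' E' < density V E"
  using assms unfolding strictly_balanced_def by blast

lemma sb_finiteE: "strictly_balanced V E \<Longrightarrow> finite E"
  using sb_finite sb_edges by (metis Pow_iff finite_Pow_iff finite_subset subsetI)

lemma overlap:
  assumes sb: "strictly_balanced V E" and f: "f \<in> Inj V n" and g: "g \<in> Inj V n"
    and ne: "cp V E f \<noteq> cp V E g" and sh: "f ` V \<inter> g ` V \<noteq> {}"
  shows "card (snd (cp V E f) \<inter> snd (cp V E g)) * card V < card E * card (f ` V \<inter> g ` V)"
proof -
  have finV: "finite V" using sb_finite[OF sb] .
  have VE: "\<forall>e\<in>E. e \<subseteq> V" using sb_edges[OF sb] .
  have finE: "finite E" using sb_finiteE[OF sb] .
  have fi: "inj_on f V" and gi: "inj_on g V" using f g unfolding Inj_def by auto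
  define IV where "IV = {a\<in>V. f a \<in> g ` V}"
  define IE where "IE = {x\<in>E. f ` x \<in> (\<lambda>e. g ` e) ` E}"
  have IVsub: "IV \<subseteq> V" and IEsub: "IE \<subseteq> E" unfolding IV_def IE_def by auto
  have imgV: "f ` IV = f ` V \<inter> g ` V" unfolding IV_def by auto
  have cIV: "card IV = card (f ` V \<inter> g ` V)"
    using imgV card_image[OF inj_on_subset[OF fi IVsub]] by simp
  have injE: "inj_on (\<lambda>e. f ` e) E" using fi VE unfolding inj_on_def
    by (meson inj_on_image_eq_iff inj_onI)
  have imgE: "(\<lambda>e. f ` e) ` IE = snd (cp V E f) \<inter> snd (cp V E g)"
    unfolding IE_def cp_def by auto
  have cIE: "card IE = card (snd (cp V E f) \<inter> snd (cp V E g))"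
    using imgE card_image[OF inj_on_subset[OF injE IEsub]] by simp
  have IEIV: "\<forall>x\<in>IE. x \<subseteq> IV"
  proof
    fix x assume x: "x \<in> IE"
    then obtain y where y: "y \<in> E" "f ` x = g ` y" unfolding IE_def by auto
    have "x \<subseteq> V" "y \<subseteq> V" using x y VE IEsub by auto
    thus "x \<subseteq> IV" unfolding IV_def using y by blast
  qed
  have IVne: "IV \<noteq> {}" using imgV sh by auto
  have finIV: "finite IV" using finV IVsub finite_subset by blast
  show ?thesis
  proof (cases "(IV, IE) = (V, E)")
    case False
    hence "density IV IE < density V E"
      using sb IVsub IEsub IEIV IVne unfolding strictly_balanced_def by blast
    moreover have "card IV > 0" "card V > 0" using finIV IVne finV sb_ne[OF sb]
      by (auto simp: card_gt_0_iff)
    ultimately have "real (card IE) * real (card V) < real (card E) * real (card IV)"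
      unfolding density_def by (simp add: divide_simps)
    hence "card IE * card V < card E * card IV" by (simp only: of_nat_mult[symmetric] of_nat_less_iff)
    thus ?thesis using cIV cIE by simp
  next
    case True
    hence "IV = V" "IE = E" by auto
    hence s1: "f ` V \<subseteq> g ` V" using imgV by (metis Int_lower2)
    have "snd (cp V E f) = (\<lambda>e. f ` e) ` E" unfolding cp_def by simp
    hence s2: "snd (cp V E f) \<subseteq> snd (cp V E g)" using imgE \<open>IE = E\<close> by (metis Int_lower2)
    have "f ` V = g ` V"
      using s1 by (rule card_subset_eq[rotated]) (auto simp: card_image fi gi finV)
    moreover have "snd (cp V E f) = snd (cp V E g)"
    proof (rule card_subset_eq[OF _ s2])
      show "finite (snd (cp V E g))" unfolding cp_def using finE by simp
      show "card (snd (cp V E f)) = card (snd (cp V E g))"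
        using card_snd_cp[OF VE f] card_snd_cp[OF VE g] by simp
    qed
    ultimately have "cp V E f = cp V E g" unfolding cp_def by simp
    thus ?thesis using ne by simp
  qed
qed

lemma sb_vle2e:
  assumes sb: "strictly_balanced V E" and "E \<noteq> {}"
  shows "card V \<le> 2 * card E"
proof -
  obtain x where x: "x \<in> E" using assms by blast
  have g: "is_graph V E" using sb sb_graph by blast
  hence xv: "x \<subseteq> V" "card x = 2" using x unfolding is_graph_def by auto
  have finV: "finite V" using g unfolding is_graph_def by simp
  have xne: "x \<noteq> {}" using xv by auto
  show ?thesis
  proof (cases "(x, {x}) = (V, E)")
    case True
    hence ve: "V = x" "E = {x}" by (simp_all add: eq_commute)
    have "card V = 2" using xv(2) ve(1) by (simp only:)
    moreover have "card E = 1" using ve(2) by (simp only: card.insert card.empty finite.emptyI) simp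
    ultimately show ?thesis by (simp only:)
  next
    case False
    have "density x {x} < density V E"
      by (rule sb_dens[OF sb xv(1) _ _ xne False]) (use x in auto)
    hence "1 / 2 < real (card E) / real (card V)" using xv unfolding density_def by simp
    moreover have "card V > 0" using finV sb_ne[OF sb] by (simp add: card_gt_0_iff)
    ultimately have "real (card V) < 2 * real (card E)" by (simp add: divide_simps)
    thus ?thesis by linarith
  qed
qed

lemma sb_empty:
  assumes sb: "strictly_balanced V E" and "E = {}"
  shows "card V = 1"
proof -
  have finV: "finite V" and ne: "V \<noteq> {}" using sb sb_finite sb_ne by auto
  obtain a where a: "a \<in> V" using ne by blast
  show ?thesis
  proof (rule ccontr)
    assume "card V \<noteq> 1"
    hence "({a}, {}) \<noteq> (V, E)" by auto
    hence "density {a} {} < density V E" by (intro sb_dens[OF sb]) (use a in auto)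
    thus False using assms(2) unfolding density_def by simp
  qed
qed

lemma finite_Kn: "finite (Kn_edges n)"
  unfolding Kn_edges_def by (rule finite_subset[of _ "Pow {..<n}"]) auto

lemma Omega_eq: "edge_orderings n = permutations_of_set (Kn_edges n)"
  unfolding edge_orderings_def permutations_of_set_def by auto

lemma Omega_fin: "finite (edge_orderings n)" and Omega_ne: "edge_orderings n \<noteq> {}"
  unfolding Omega_eq using finite_Kn by auto

lemma prob_eq:
  "measure_pmf.prob (graph_process n) B = card (edge_orderings n \<inter> B) / card (edge_orderings n)"
  unfolding graph_process_def by (rule measure_pmf_of_set[OF Omega_ne Omega_fin])

lemma edge_prob:
  assumes "S \<subseteq> Kn_edges n" "m \<le> card (Kn_edges n)"
  shows "real (card {xs \<in> edge_orderings n. S \<subseteq> graph_at xs m}) =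
           card (edge_orderings n) * gq (card (Kn_edges n)) m (card S)"
  using perm_subset_card[OF finite_Kn assms(1) refl assms(2)] finite_Kn
  unfolding Omega_eq graph_at_def by simp

lemma sum_ind: "finite A \<Longrightarrow> (\<Sum>x\<in>A. if P x then 1 else 0 :: real) = real (card {x\<in>A. P x})"
  by (simp add: sum.If_cases Int_def conj_commute)

lemma cheb:
  fixes X :: "'b \<Rightarrow> real" and \<mu> N :: real
  assumes fin: "finite \<Omega>" and ne: "\<Omega> \<noteq> {}" and mu: "\<mu> = (\<Sum>w\<in>\<Omega>. X w) / card \<Omega>" and N: "N < \<mu>"
  shows "real (card {w\<in>\<Omega>. X w < N}) * (\<mu> - N)^2 \<le> (\<Sum>w\<in>\<Omega>. (X w)^2) - card \<Omega> * \<mu>^2"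
proof -
  have cpos: "real (card \<Omega>) > 0" using fin ne by (simp add: card_gt_0_iff)
  have sX: "(\<Sum>w\<in>\<Omega>. X w) = card \<Omega> * \<mu>" using mu cpos by simp
  have "real (card {w\<in>\<Omega>. X w < N}) * (\<mu> - N)^2 = (\<Sum>w\<in>{w\<in>\<Omega>. X w < N}. (\<mu> - N)^2)" by simp
  also have "\<dots> \<le> (\<Sum>w\<in>{w\<in>\<Omega>. X w < N}. (X w - \<mu>)^2)"
  proof (rule sum_mono)
    fix w assume "w \<in> {w\<in>\<Omega>. X w < N}"
    hence "0 \<le> \<mu> - N" "\<mu> - N \<le> \<mu> - X w" using N by auto
    hence "(\<mu> - N)^2 \<le> (\<mu> - X w)^2" by (intro power_mono) auto
    thus "(\<mu> - N)^2 \<le> (X w - \<mu>)^2" by (simp add: power2_commute)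
  qed
  also have "\<dots> \<le> (\<Sum>w\<in>\<Omega>. (X w - \<mu>)^2)"
    by (rule sum_mono2[OF fin]) auto
  also have "\<dots> = (\<Sum>w\<in>\<Omega>. (X w)^2) - 2 * \<mu> * (\<Sum>w\<in>\<Omega>. X w) + card \<Omega> * \<mu>^2"
  proof -
    have "(\<Sum>w\<in>\<Omega>. (X w - \<mu>)^2) = (\<Sum>w\<in>\<Omega>. (X w)^2 - (2 * \<mu>) * X w + \<mu>^2)"
      by (rule sum.cong) (auto simp: power2_diff algebra_simps)
    also have "\<dots> = (\<Sum>w\<in>\<Omega>. (X w)^2) - (\<Sum>w\<in>\<Omega>. (2 * \<mu>) * X w) + (\<Sum>w\<in>\<Omega>. \<mu>^2)"
      by (simp add: sum.distrib sum_subtractf)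
    also have "\<dots> = (\<Sum>w\<in>\<Omega>. (X w)^2) - 2 * \<mu> * (\<Sum>w\<in>\<Omega>. X w) + card \<Omega> * \<mu>^2"
      by (simp only: sum_distrib_left[symmetric]) simp
    finally show ?thesis .
  qed
  also have "\<dots> = (\<Sum>w\<in>\<Omega>. (X w)^2) - card \<Omega> * \<mu>^2" using sX by (simp add: power2_eq_square)
  finally show ?thesis .
qed

lemma graph_at_mono: "t \<le> t' \<Longrightarrow> graph_at xs t \<subseteq> graph_at xs t'"
  unfolding graph_at_def by (rule set_take_subset_set_take)

lemma copies_mono: assumes "G \<subseteq> G'" shows "copies V E n G \<subseteq> copies V E n G'"
proof
  fix C assume "C \<in> copies V E n G"
  then obtain f where f: "inj_on f V" "f ` V \<subseteq> {..<n}" "fst C = f ` V"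
        "snd C = (\<lambda>e. f ` e) ` E" "snd C \<subseteq> G" unfolding copies_def by (cases C) auto
  have "snd C \<subseteq> G'" using f(5) assms by (rule order_trans)
  thus "C \<in> copies V E n G'" unfolding copies_def using f by (cases C) auto
qed

lemma good_incl:
  assumes VE: "\<forall>e\<in>E. e \<subseteq> V" and finV: "finite V"
    and N: "N \<le> card (copies V E n (graph_at xs m))"
    and dis: "\<forall>C\<in>copies V E n (graph_at xs m). \<forall>D\<in>copies V E n (graph_at xs m). C \<noteq> D \<longrightarrow> fst C \<inter> fst D = {}"
  shows "first_copies_disjoint V E N n xs"
proof -
  have fin: "\<And>G. finite (copies V E n G)"
    using copies_eq[OF VE] finite_Inj[OF finV] by (metis (no_types, lifting) finite_imageI finite_subset mem_Collect_eq subsetI)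
  have mono: "\<And>t t'. t \<le> t' \<Longrightarrow> copies V E n (graph_at xs t) \<subseteq> copies V E n (graph_at xs t')"
    by (intro copies_mono graph_at_mono)
  have "graph_at xs m \<subseteq> graph_at xs (length xs)" unfolding graph_at_def
    by (metis set_take_subset take_all order_refl)
  hence "card (copies V E n (graph_at xs m)) \<le> card (copies V E n (graph_at xs (length xs)))"
    by (intro card_mono fin copies_mono)
  hence A: "N \<le> card (copies V E n (graph_at xs (length xs)))" using N by linarith
  have B: "\<forall>t \<le> length xs. (t = 0 \<or> card (copies V E n (graph_at xs (t - 1))) < N) \<longrightarrow>
        (\<forall>C \<in> copies V E n (graph_at xs t). \<forall>D \<in> copies V E n (graph_at xs t).
            C \<noteq> D \<longrightarrow> fst C \<inter> fst D = {})"
  proof (intro allI impI)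
    fix t assume "t \<le> length xs" and h: "t = 0 \<or> card (copies V E n (graph_at xs (t - 1))) < N"
    have "t \<le> m"
    proof (rule ccontr)
      assume "\<not> t \<le> m"
      hence "m \<le> t - 1" "t \<noteq> 0" by auto
      hence "card (copies V E n (graph_at xs m)) \<le> card (copies V E n (graph_at xs (t - 1)))"
        by (intro card_mono fin mono)
      thus False using h N \<open>t \<noteq> 0\<close> by linarith
    qed
    hence sub: "copies V E n (graph_at xs t) \<subseteq> copies V E n (graph_at xs m)" by (rule mono)
    show "\<forall>C \<in> copies V E n (graph_at xs t). \<forall>D \<in> copies V E n (graph_at xs t).
            C \<noteq> D \<longrightarrow> fst C \<inter> fst D = {}"
      using dis sub by blast
  qed
  show ?thesis unfolding first_copies_disjoint_def using A B by blast
qed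


definition AC :: "'a set \<Rightarrow> 'a set set \<Rightarrow> nat \<Rightarrow> (nat set \<times> nat set set) set" where
  "AC V E n = cp V E ` Inj V n"

definition Bad :: "'a set \<Rightarrow> 'a set set \<Rightarrow> nat \<Rightarrow> ((nat set \<times> nat set set) \<times> (nat set \<times> nat set set)) set" where
  "Bad V E n = {p \<in> AC V E n \<times> AC V E n. fst p \<noteq> snd p \<and> fst (fst p) \<inter> fst (snd p) \<noteq> {}}"

definition ExpX :: "'a set \<Rightarrow> 'a set set \<Rightarrow> nat \<Rightarrow> nat \<Rightarrow> real" where
  "ExpX V E n m = real (card (AC V E n)) * gq (card (Kn_edges n)) m (card E)"

definition ExpY :: "'a set \<Rightarrow> 'a set set \<Rightarrow> nat \<Rightarrow> nat \<Rightarrow> real" where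
  "ExpY V E n m = (\<Sum>p\<in>Bad V E n. gq (card (Kn_edges n)) m (card (snd (fst p) \<union> snd (snd p))))"

lemma main_n:
  assumes sb: "strictly_balanced V E" and mM: "m \<le> card (Kn_edges n)"
    and NX: "real N < ExpX V E n m"
  shows "measure_pmf.prob (graph_process n) {xs. first_copies_disjoint V E N n xs}
          \<ge> 1 - ((ExpX V E n m + ExpY V E n m) / (ExpX V E n m - real N)^2 + ExpY V E n m)"
proof -
  define \<Omega> where "\<Omega> = edge_orderings n"
  define M where "M = card (Kn_edges n)"
  define A where "A = AC V E n"
  define k where "k = card E"
  define G where "G = (\<lambda>w. graph_at w m)"
  define X where "X = (\<lambda>w. real (card (copies V E n (G w))))"
  define ind where "ind = (\<lambda>S w. if S \<subseteq> G w then 1 else (0::real))"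
  have VE: "\<forall>e\<in>E. e \<subseteq> V" using sb_edges[OF sb] .
  have finV: "finite V" using sb_finite[OF sb] .
  have gr: "is_graph V E" using sb_graph[OF sb] .
  have finA: "finite A" unfolding A_def AC_def using finite_Inj[OF finV] by simp
  have finO: "finite \<Omega>" and neO: "\<Omega> \<noteq> {}" unfolding \<Omega>_def using Omega_fin Omega_ne by auto
  have cO: "real (card \<Omega>) > 0" using finO neO by (simp add: card_gt_0_iff)
  have Akn: "\<And>C. C \<in> A \<Longrightarrow> snd C \<subseteq> Kn_edges n" unfolding A_def AC_def
    using snd_cp_Kn[OF gr] by blast
  have Ak: "\<And>C. C \<in> A \<Longrightarrow> card (snd C) = k" unfolding A_def AC_def k_def
    using card_snd_cp[OF VE] by blast
  have cardw: "\<And>S. S \<subseteq> Kn_edges n \<Longrightarrow> (\<Sum>w\<in>\<Omega>. ind S w) = card \<Omega> * gq M m (card S)"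
  proof -
    fix S assume "S \<subseteq> Kn_edges n"
    have "(\<Sum>w\<in>\<Omega>. ind S w) = real (card {w\<in>\<Omega>. S \<subseteq> G w})"
      unfolding ind_def by (rule sum_ind[OF finO])
    also have "\<dots> = card \<Omega> * gq M m (card S)"
      unfolding \<Omega>_def G_def M_def by (rule edge_prob[OF \<open>S \<subseteq> Kn_edges n\<close> mM])
    finally show "(\<Sum>w\<in>\<Omega>. ind S w) = card \<Omega> * gq M m (card S)" .
  qed
  have Xs: "\<And>w. X w = (\<Sum>C\<in>A. ind (snd C) w)"
  proof -
    fix w
    have "X w = real (card {C\<in>A. snd C \<subseteq> G w})"
      unfolding X_def A_def AC_def copies_eq[OF VE] ..
    also have "\<dots> = (\<Sum>C\<in>A. ind (snd C) w)" unfolding ind_def by (rule sum_ind[OF finA, symmetric])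
    finally show "X w = (\<Sum>C\<in>A. ind (snd C) w)" .
  qed
  have sumX: "(\<Sum>w\<in>\<Omega>. X w) = card \<Omega> * ExpX V E n m"
  proof -
    have "(\<Sum>w\<in>\<Omega>. X w) = (\<Sum>C\<in>A. \<Sum>w\<in>\<Omega>. ind (snd C) w)"
      unfolding Xs by (rule sum.swap)
    also have "\<dots> = (\<Sum>C\<in>A. card \<Omega> * gq M m k)"
      by (rule sum.cong[OF refl]) (simp add: cardw Akn Ak)
    also have "\<dots> = card \<Omega> * ExpX V E n m" unfolding ExpX_def A_def M_def k_def by simp
    finally show ?thesis .
  qed
  define E2 where "E2 = (\<Sum>C\<in>A. \<Sum>D\<in>A. gq M m (card (snd C \<union> snd D)))"
  have sumX2: "(\<Sum>w\<in>\<Omega>. (X w)^2) = card \<Omega> * E2"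
  proof -
    have "\<And>w. (X w)^2 = (\<Sum>C\<in>A. \<Sum>D\<in>A. ind (snd C \<union> snd D) w)"
    proof -
      fix w
      have "(X w)^2 = (\<Sum>C\<in>A. ind (snd C) w) * (\<Sum>D\<in>A. ind (snd D) w)"
        unfolding Xs power2_eq_square ..
      also have "\<dots> = (\<Sum>C\<in>A. \<Sum>D\<in>A. ind (snd C) w * ind (snd D) w)"
        by (rule sum_product)
      also have "\<dots> = (\<Sum>C\<in>A. \<Sum>D\<in>A. ind (snd C \<union> snd D) w)"
        unfolding ind_def by (intro sum.cong refl) auto
      finally show "(X w)^2 = (\<Sum>C\<in>A. \<Sum>D\<in>A. ind (snd C \<union> snd D) w)" .
    qed
    hence "(\<Sum>w\<in>\<Omega>. (X w)^2) = (\<Sum>w\<in>\<Omega>. \<Sum>C\<in>A. \<Sum>D\<in>A. ind (snd C \<union> snd D) w)" by simp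
    also have "\<dots> = (\<Sum>C\<in>A. \<Sum>w\<in>\<Omega>. \<Sum>D\<in>A. ind (snd C \<union> snd D) w)" by (rule sum.swap)
    also have "\<dots> = (\<Sum>C\<in>A. \<Sum>D\<in>A. \<Sum>w\<in>\<Omega>. ind (snd C \<union> snd D) w)"
      by (rule sum.cong[OF refl]) (rule sum.swap)
    also have "\<dots> = (\<Sum>C\<in>A. \<Sum>D\<in>A. card \<Omega> * gq M m (card (snd C \<union> snd D)))"
      by (intro sum.cong refl cardw) (use Akn in blast)
    also have "\<dots> = card \<Omega> * E2" unfolding E2_def by (simp add: sum_distrib_left)
    finally show ?thesis .
  qed
  have gk: "\<And>C. C \<in> A \<Longrightarrow> gq M m (card (snd C \<union> snd C)) = gq M m k" using Ak by simp
  have nng: "\<And>j. 0 \<le> gq M m j" using gq_nonneg[OF mM] unfolding M_def .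
  define h where "h = (\<lambda>p::(nat set \<times> nat set set) \<times> (nat set \<times> nat set set). gq M m (card (snd (fst p) \<union> snd (snd p))))"
  have BadA: "Bad V E n \<subseteq> A \<times> A" unfolding Bad_def A_def by auto
  have pt: "\<And>C D. C \<in> A \<Longrightarrow> D \<in> A \<Longrightarrow> gq M m (card (snd C \<union> snd D)) - gq M m k * gq M m k
     \<le> (if C = D then gq M m k else 0) + (if (C, D) \<in> Bad V E n then h (C, D) else 0)"
  proof -
    fix C D assume C: "C \<in> A" and D: "D \<in> A"
    show "gq M m (card (snd C \<union> snd D)) - gq M m k * gq M m k
     \<le> (if C = D then gq M m k else 0) + (if (C, D) \<in> Bad V E n then h (C, D) else 0)"
    proof (cases "C = D")
      case True
      have "(C, D) \<notin> Bad V E n" using True unfolding Bad_def by auto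
      thus ?thesis using True gk[OF C] nng[of k] by (simp add: mult_nonneg_nonneg)
    next
      case False
      show ?thesis
      proof (cases "fst C \<inter> fst D = {}")
        case True
        have "snd C \<inter> snd D = {}"
          using disjoint_edges[OF gr True] C D unfolding A_def AC_def by blast
        moreover have "finite (snd C)" "finite (snd D)"
          using Akn[OF C] Akn[OF D] finite_Kn finite_subset by blast+
        ultimately have "card (snd C \<union> snd D) = k + k" using Ak[OF C] Ak[OF D]
          by (simp add: card_Un_disjoint)
        hence "gq M m (card (snd C \<union> snd D)) \<le> gq M m k * gq M m k"
          using gq_add[OF mM, of k k] unfolding M_def by simp
        moreover have "0 \<le> (if (C, D) \<in> Bad V E n then h (C, D) else 0)"
          unfolding h_def using nng by simp
        ultimately show ?thesis using False by simp
      next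
        case False2: False
        hence "(C, D) \<in> Bad V E n" using False C D unfolding Bad_def A_def by auto
        thus ?thesis using False nng[of k] unfolding h_def by (simp add: mult_nonneg_nonneg)
      qed
    qed
  qed
  have var: "E2 - (ExpX V E n m)^2 \<le> ExpX V E n m + ExpY V E n m"
  proof -
    have ex: "ExpX V E n m = (\<Sum>C\<in>A. gq M m k)" unfolding ExpX_def A_def M_def k_def by simp
    have "(ExpX V E n m)^2 = (\<Sum>C\<in>A. \<Sum>D\<in>A. gq M m k * gq M m k)"
      unfolding ex power2_eq_square by (rule sum_product)
    hence "E2 - (ExpX V E n m)^2 = (\<Sum>C\<in>A. \<Sum>D\<in>A. gq M m (card (snd C \<union> snd D)) - gq M m k * gq M m k)"
      unfolding E2_def by (simp add: sum_subtractf)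
    also have "\<dots> \<le> (\<Sum>C\<in>A. \<Sum>D\<in>A. (if C = D then gq M m k else 0) + (if (C, D) \<in> Bad V E n then h (C, D) else 0))"
      by (intro sum_mono pt)
    also have "\<dots> = (\<Sum>C\<in>A. \<Sum>D\<in>A. (if C = D then gq M m k else 0)) + (\<Sum>C\<in>A. \<Sum>D\<in>A. (if (C, D) \<in> Bad V E n then h (C, D) else 0))"
      by (simp add: sum.distrib)
    also have "(\<Sum>C\<in>A. \<Sum>D\<in>A. (if C = D then gq M m k else 0)) = ExpX V E n m"
      unfolding ex using finA by (intro sum.cong refl) simp
    also have "(\<Sum>C\<in>A. \<Sum>D\<in>A. (if (C, D) \<in> Bad V E n then h (C, D) else 0)) = ExpY V E n m"
    proof -
      have "(\<Sum>C\<in>A. \<Sum>D\<in>A. (if (C, D) \<in> Bad V E n then h (C, D) else 0))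
          = (\<Sum>p\<in>A \<times> A. (if p \<in> Bad V E n then h p else 0))"
        by (simp add: sum.cartesian_product)
      also have "\<dots> = (\<Sum>p\<in>Bad V E n. h p)"
        using finA BadA by (simp add: sum.If_cases Int_absorb1)
      finally show ?thesis unfolding ExpY_def h_def M_def .
    qed
    finally show ?thesis .
  qed
  define mu where "mu = ExpX V E n m"
  define B1 where "B1 = {w\<in>\<Omega>. X w < real N}"
  define B2 where "B2 = {w\<in>\<Omega>. \<exists>p\<in>Bad V E n. snd (fst p) \<union> snd (snd p) \<subseteq> G w}"
  have c1: "real (card B1) * (mu - real N)^2 \<le> card \<Omega> * (ExpX V E n m + ExpY V E n m)"
  proof -
    have "real (card B1) * (mu - real N)^2 \<le> (\<Sum>w\<in>\<Omega>. (X w)^2) - card \<Omega> * mu^2"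
      unfolding B1_def by (rule cheb[OF finO neO]) (use sumX cO NX in \<open>simp_all add: mu_def\<close>)
    also have "\<dots> = card \<Omega> * (E2 - mu^2)" using sumX2 by (simp add: algebra_simps)
    also have "\<dots> \<le> card \<Omega> * (ExpX V E n m + ExpY V E n m)"
      using var cO unfolding mu_def by (intro mult_left_mono) auto
    finally show ?thesis .
  qed
  have c2: "real (card B2) \<le> card \<Omega> * ExpY V E n m"
  proof -
    have finBad: "finite (Bad V E n)" using finA BadA finite_subset by blast
    have "B2 = (\<Union>p\<in>Bad V E n. {w\<in>\<Omega>. snd (fst p) \<union> snd (snd p) \<subseteq> G w})"
      unfolding B2_def by blast
    hence "card B2 \<le> (\<Sum>p\<in>Bad V E n. card {w\<in>\<Omega>. snd (fst p) \<union> snd (snd p) \<subseteq> G w})"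
      using card_UN_le[OF finBad] by simp
    hence "real (card B2) \<le> (\<Sum>p\<in>Bad V E n. real (card {w\<in>\<Omega>. snd (fst p) \<union> snd (snd p) \<subseteq> G w}))"
      by (simp only: of_nat_sum[symmetric] of_nat_le_iff)
    also have "\<dots> = (\<Sum>p\<in>Bad V E n. card \<Omega> * h p)"
    proof (rule sum.cong[OF refl])
      fix p assume p: "p \<in> Bad V E n"
      hence "fst p \<in> A" "snd p \<in> A" using BadA by (auto simp: mem_Times_iff)
      hence "snd (fst p) \<union> snd (snd p) \<subseteq> Kn_edges n" using Akn by (simp add: Un_least)
      thus "real (card {w\<in>\<Omega>. snd (fst p) \<union> snd (snd p) \<subseteq> G w}) = card \<Omega> * h p"
        unfolding \<Omega>_def G_def h_def M_def by (rule edge_prob[OF _ mM])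
    qed
    also have "\<dots> = card \<Omega> * ExpY V E n m"
      unfolding ExpY_def h_def M_def by (simp add: sum_distrib_left)
    finally show ?thesis .
  qed
  have incl: "\<Omega> - {xs. first_copies_disjoint V E N n xs} \<subseteq> B1 \<union> B2"
  proof
    fix w assume w: "w \<in> \<Omega> - {xs. first_copies_disjoint V E N n xs}"
    show "w \<in> B1 \<union> B2"
    proof (rule ccontr)
      assume nb: "w \<notin> B1 \<union> B2"
      hence "\<not> X w < real N" using w unfolding B1_def by blast
      hence n1: "N \<le> card (copies V E n (graph_at w m))" unfolding X_def G_def by simp
      have n2: "\<forall>C\<in>copies V E n (graph_at w m). \<forall>D\<in>copies V E n (graph_at w m). C \<noteq> D \<longrightarrow> fst C \<inter> fst D = {}"
      proof (intro ballI impI)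
        fix C D assume C: "C \<in> copies V E n (graph_at w m)" and D: "D \<in> copies V E n (graph_at w m)"
          and ne: "C \<noteq> D"
        have C': "C \<in> A" "snd C \<subseteq> G w" using C unfolding copies_eq[OF VE] A_def AC_def G_def by auto
        have D': "D \<in> A" "snd D \<subseteq> G w" using D unfolding copies_eq[OF VE] A_def AC_def G_def by auto
        show "fst C \<inter> fst D = {}"
        proof (rule ccontr)
          assume "fst C \<inter> fst D \<noteq> {}"
          hence "(C, D) \<in> Bad V E n" using C' D' ne unfolding Bad_def A_def by auto
          moreover have "snd (fst (C, D)) \<union> snd (snd (C, D)) \<subseteq> G w" using C' D' by simp
          moreover have "w \<in> \<Omega>" using w by blast
          ultimately have "w \<in> B2" unfolding B2_def by blast
          thus False using nb by blast
        qed
      qed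
      have "first_copies_disjoint V E N n w" by (rule good_incl[OF VE finV n1 n2])
      thus False using w by blast
    qed
  qed
  have "card \<Omega> \<le> card (\<Omega> \<inter> {xs. first_copies_disjoint V E N n xs}) + card (B1 \<union> B2)"
  proof -
    have "\<Omega> \<subseteq> (\<Omega> \<inter> {xs. first_copies_disjoint V E N n xs}) \<union> (B1 \<union> B2)" using incl by blast
    hence "card \<Omega> \<le> card ((\<Omega> \<inter> {xs. first_copies_disjoint V E N n xs}) \<union> (B1 \<union> B2))"
      by (rule card_mono[rotated]) (use finO in \<open>auto simp: B1_def B2_def\<close>)
    also have "\<dots> \<le> card (\<Omega> \<inter> {xs. first_copies_disjoint V E N n xs}) + card (B1 \<union> B2)"
      by (rule card_Un_le)
    finally show ?thesis .
  qed
  moreover have "card (B1 \<union> B2) \<le> card B1 + card B2" by (rule card_Un_le)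
  ultimately have cc: "real (card \<Omega>) \<le> real (card (\<Omega> \<inter> {xs. first_copies_disjoint V E N n xs})) + real (card B1) + real (card B2)"
    by linarith
  have pos: "(mu - real N)^2 > 0" using NX unfolding mu_def by simp
  have c1': "real (card B1) \<le> card \<Omega> * ((ExpX V E n m + ExpY V E n m) / (mu - real N)^2)"
    using c1 pos by (simp add: field_simps)
  have "measure_pmf.prob (graph_process n) {xs. first_copies_disjoint V E N n xs}
      = real (card (\<Omega> \<inter> {xs. first_copies_disjoint V E N n xs})) / card \<Omega>"
    unfolding prob_eq \<Omega>_def ..
  also have "\<dots> \<ge> (card \<Omega> - card \<Omega> * ((ExpX V E n m + ExpY V E n m) / (mu - real N)^2) - card \<Omega> * ExpY V E n m) / card \<Omega>"
    using cc c1' c2 cO by (intro divide_right_mono) auto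
  also have "(card \<Omega> - card \<Omega> * ((ExpX V E n m + ExpY V E n m) / (mu - real N)^2) - card \<Omega> * ExpY V E n m) / card \<Omega>
     = 1 - ((ExpX V E n m + ExpY V E n m) / (mu - real N)^2 + ExpY V E n m)"
    using cO by (simp add: diff_divide_distrib)
  finally show ?thesis unfolding mu_def .
qed

lemma card_Inj_le: "finite V \<Longrightarrow> card (Inj V n) \<le> n ^ card V"
proof -
  assume fin: "finite V"
  have "card (Inj V n) \<le> card (V \<rightarrow>\<^sub>E {..<n})"
    unfolding Inj_def by (rule card_mono) (auto intro: finite_PiE fin)
  also have "\<dots> = n ^ card V" using fin by (simp add: card_PiE)
  finally show ?thesis .
qed

lemma card_Inj_ge: "finite V \<Longrightarrow> (n - card V) ^ card V \<le> card (Inj V n)"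
proof -
  assume fin: "finite V"
  have "card (Inj V n) = n ^ (card V - card V) * prod ((-) n) {0..<card V}"
    unfolding Inj_def using card_inj_on_subset_funcset[OF fin _ order_refl, of "{..<n}"] by simp
  also have "\<dots> = prod ((-) n) {0..<card V}" by simp
  also have "\<dots> \<ge> prod (\<lambda>_. n - card V) {0..<card V}"
    by (rule prod_mono) auto
  finally show ?thesis by simp
qed

lemma AC_card_ge:
  assumes fin: "finite V"
  shows "card (Inj V n) \<le> card (AC V E n) * card V ^ card V"
proof -
  have finI: "finite (Inj V n)" using finite_Inj[OF fin] .
  have "Inj V n \<subseteq> (\<Union>C\<in>AC V E n. {f \<in> Inj V n. cp V E f = C})" unfolding AC_def by blast
  hence "card (Inj V n) \<le> card (\<Union>C\<in>AC V E n. {f \<in> Inj V n. cp V E f = C})"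
    by (rule card_mono[rotated]) (rule finite_subset[OF _ finI], blast)
  also have "\<dots> \<le> (\<Sum>C\<in>AC V E n. card {f \<in> Inj V n. cp V E f = C})"
    by (rule card_UN_le) (simp add: AC_def finI)
  also have "\<dots> \<le> (\<Sum>C\<in>AC V E n. card V ^ card V)"
  proof (rule sum_mono)
    fix C assume "C \<in> AC V E n"
    then obtain g where g: "g \<in> Inj V n" "C = cp V E g" unfolding AC_def by blast
    have cC: "card (fst C) = card V" using card_fst_cp[OF g(1)] g(2) by simp
    have fC: "finite (fst C)" using g fin unfolding cp_def by simp
    have "{f \<in> Inj V n. cp V E f = C} \<subseteq> V \<rightarrow>\<^sub>E fst C"
    proof
      fix f assume f: "f \<in> {f \<in> Inj V n. cp V E f = C}"
      hence "f ` V = fst C" "f \<in> extensional V" unfolding cp_def Inj_def by (auto simp: PiE_def)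
      thus "f \<in> V \<rightarrow>\<^sub>E fst C" by (auto simp: PiE_def)
    qed
    hence "card {f \<in> Inj V n. cp V E f = C} \<le> card (V \<rightarrow>\<^sub>E fst C)"
      by (rule card_mono[rotated]) (auto intro: finite_PiE fin fC)
    also have "\<dots> = card V ^ card V" using fin cC by (simp add: card_PiE)
    finally show "card {f \<in> Inj V n. cp V E f = C} \<le> card V ^ card V" .
  qed
  also have "\<dots> = card (AC V E n) * card V ^ card V" by simp
  finally show ?thesis .
qed

lemma ExpX_lower:
  assumes sb: "strictly_balanced V E" and em: "card E \<le> m" and mM: "m \<le> card (Kn_edges n)"
  shows "real ((n - card V) ^ card V) / real (card V ^ card V) *
           ((real m - real (card E)) / real (card (Kn_edges n))) ^ card E \<le> ExpX V E n m"
proof -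
  have fin: "finite V" using sb_finite[OF sb] .
  have vpos: "card V > 0" using fin sb_ne[OF sb] by (simp add: card_gt_0_iff)
  have "(n - card V) ^ card V \<le> card (AC V E n) * card V ^ card V"
    using card_Inj_ge[OF fin, of n] AC_card_ge[OF fin, of n E] by linarith
  hence "real ((n - card V) ^ card V) \<le> real (card (AC V E n)) * real (card V ^ card V)"
    by (simp only: of_nat_mult[symmetric] of_nat_le_iff)
  hence a: "real ((n - card V) ^ card V) / real (card V ^ card V) \<le> real (card (AC V E n))"
    using vpos by (simp add: divide_simps)
  have b: "((real m - real (card E)) / real (card (Kn_edges n))) ^ card E \<le> gq (card (Kn_edges n)) m (card E)"
    by (rule gq_lower[OF em mM])
  have c: "0 \<le> ((real m - real (card E)) / real (card (Kn_edges n))) ^ card E"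
    using em by simp
  show ?thesis unfolding ExpX_def using a b c by (intro mult_mono) auto
qed

lemma expo_ineq:
  fixes e v c j u :: real
  assumes e: "e > 0" and cv: "c * v \<le> e * j - 1" and c: "c \<ge> 0" and u: "u = 2 * e - c"
  shows "u * (1 / (4 * e^2) - v / e) \<le> j - 2 * v - 1 / (2 * e)"
proof -
  have "u * (1 / (4 * e^2) - v / e) = 1 / (2 * e) - c / (4 * e^2) - 2 * v + c * v / e"
    using e unfolding u by (simp add: field_simps power2_eq_square)
  moreover have "c * v / e \<le> j - 1 / e" using cv e by (simp add: field_simps)
  moreover have "c / (4 * e^2) \<ge> 0" using c e by simp
  moreover have "1 / (2 * e) - 1 / e = - 1 / (2 * e)" using e by (simp add: field_simps)
  ultimately show ?thesis by linarith
qed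

lemma inner_sum:
  assumes fin: "finite V" and f: "f \<in> Inj V n"
  shows "(\<Sum>g\<in>Inj V n. real n ^ card (f ` V \<inter> g ` V)) \<le> ((real (card V) + 1) * real n) ^ card V"
proof -
  define w where "w = (\<lambda>x. if x \<in> f ` V then real n else 1)"
  have w0: "\<And>x. 0 \<le> w x" unfolding w_def by simp
  have eq: "\<And>g. g \<in> Inj V n \<Longrightarrow> real n ^ card (f ` V \<inter> g ` V) = (\<Prod>a\<in>V. w (g a))"
  proof -
    fix g assume g: "g \<in> Inj V n"
    hence gi: "inj_on g V" unfolding Inj_def by simp
    have "g ` {a\<in>V. g a \<in> f ` V} = f ` V \<inter> g ` V"
    proof (intro equalityI subsetI)
      fix y assume y: "y \<in> f ` V \<inter> g ` V"
      then obtain b where b: "b \<in> V" "y = g b" by blast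
      hence "b \<in> {a\<in>V. g a \<in> f ` V}" using y by simp
      thus "y \<in> g ` {a\<in>V. g a \<in> f ` V}" using b(2) by blast
    qed auto
    hence "card (f ` V \<inter> g ` V) = card {a\<in>V. g a \<in> f ` V}"
      using card_image[OF inj_on_subset[OF gi, of "{a\<in>V. g a \<in> f ` V}"]] by auto
    moreover have "(\<Prod>a\<in>V. w (g a)) = real n ^ card {a\<in>V. g a \<in> f ` V}"
      unfolding w_def using fin by (simp add: prod.If_cases Int_def conj_commute)
    ultimately show "real n ^ card (f ` V \<inter> g ` V) = (\<Prod>a\<in>V. w (g a))" by simp
  qed
  have "(\<Sum>g\<in>Inj V n. real n ^ card (f ` V \<inter> g ` V)) = (\<Sum>g\<in>Inj V n. \<Prod>a\<in>V. w (g a))"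
    by (rule sum.cong[OF refl]) (rule eq)
  also have "\<dots> \<le> (\<Sum>g\<in>V \<rightarrow>\<^sub>E {..<n}. \<Prod>a\<in>V. w (g a))"
    by (rule sum_mono2) (auto simp: Inj_def fin intro: finite_PiE prod_nonneg w0)
  also have "\<dots> = (\<Prod>a\<in>V. \<Sum>x\<in>{..<n}. w x)"
    using prod_sum_PiE[OF fin, of "\<lambda>_. {..<n}" "\<lambda>_ x. w x"] by simp
  also have "\<dots> = (\<Sum>x\<in>{..<n}. w x) ^ card V" by simp
  also have "\<dots> \<le> ((real (card V) + 1) * real n) ^ card V"
  proof (rule power_mono)
    show "0 \<le> (\<Sum>x\<in>{..<n}. w x)" by (rule sum_nonneg) (rule w0)
    have "(\<Sum>x\<in>{..<n}. w x) \<le> (\<Sum>x\<in>{..<n}. 1 + (if x \<in> f ` V then real n else 0))"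
      by (rule sum_mono) (simp add: w_def)
    also have "\<dots> = real n + real n * real (card ({..<n} \<inter> f ` V))"
      by (simp add: sum.distrib sum.If_cases)
    also have "\<dots> \<le> real n + real n * real (card V)"
    proof -
      have "card ({..<n} \<inter> f ` V) \<le> card (f ` V)" by (rule card_mono) (auto simp: fin)
      also have "\<dots> \<le> card V" by (rule card_image_le[OF fin])
      finally have "real (card ({..<n} \<inter> f ` V)) \<le> real (card V)" by simp
      thus ?thesis by (simp add: mult_left_mono)
    qed
    also have "\<dots> = (real (card V) + 1) * real n" by (simp add: algebra_simps)
    finally show "(\<Sum>x\<in>{..<n}. w x) \<le> (real (card V) + 1) * real n" .
  qed
  finally show ?thesis .
qed

lemma ExpY_upper:
  assumes sb: "strictly_balanced V E" and Ene: "E \<noteq> {}" and n1: "n \<ge> 1"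
    and mM: "m \<le> card (Kn_edges n)" and q0: "q \<ge> 0"
    and mq: "real m \<le> q * real (card (Kn_edges n))"
    and qdef: "q = real n powr (1 / (4 * real (card E)^2) - real (card V) / real (card E))"
  shows "ExpY V E n m \<le> (real (card V) + 1) ^ card V * real n powr (- 1 / (2 * real (card E)))"
proof -
  define v where "v = card V"
  define e where "e = card E"
  define M where "M = card (Kn_edges n)"
  define K where "K = - 2 * real v - 1 / (2 * real e)"
  have finV: "finite V" using sb_finite[OF sb] .
  have finE: "finite E" using sb_finiteE[OF sb] .
  have VE: "\<forall>e\<in>E. e \<subseteq> V" using sb_edges[OF sb] .
  have epos: "real e > 0" unfolding e_def using finE Ene by (simp add: card_gt_0_iff)
  have npos: "real n > 0" using n1 by simp
  define BI where "BI = {x \<in> Inj V n \<times> Inj V n. cp V E (fst x) \<noteq> cp V E (snd x) \<and> fst x ` V \<inter> snd x ` V \<noteq> {}}"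
  define F where "F = (\<lambda>x::('a \<Rightarrow> nat) \<times> ('a \<Rightarrow> nat). (cp V E (fst x), cp V E (snd x)))"
  define h where "h = (\<lambda>p::(nat set \<times> nat set set) \<times> (nat set \<times> nat set set). gq M m (card (snd (fst p) \<union> snd (snd p))))"
  have finI: "finite (Inj V n)" using finite_Inj[OF finV] .
  have finBI: "finite BI" unfolding BI_def using finI by simp
  have nng: "\<And>j. 0 \<le> gq M m j" using gq_nonneg[OF mM] unfolding M_def .
  have BadF: "Bad V E n = F ` BI"
  proof (intro equalityI subsetI)
    fix p assume p: "p \<in> Bad V E n"
    hence "fst p \<in> AC V E n" "snd p \<in> AC V E n" unfolding Bad_def by (auto simp: mem_Times_iff)
    then obtain f g where f1: "f \<in> Inj V n" "fst p = cp V E f" and g1: "g \<in> Inj V n" "snd p = cp V E g"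
      unfolding AC_def by blast
    hence fg1: "f \<in> Inj V n" "g \<in> Inj V n" "p = (cp V E f, cp V E g)" by (metis prod.collapse)+
    have fg: "f \<in> Inj V n" "g \<in> Inj V n" "p = (cp V E f, cp V E g)"
      "cp V E f \<noteq> cp V E g" "fst (cp V E f) \<inter> fst (cp V E g) \<noteq> {}"
      using fg1 p unfolding Bad_def by auto
    hence "(f, g) \<in> BI" unfolding BI_def cp_def by auto
    moreover have "p = F (f, g)" unfolding F_def using fg by simp
    ultimately show "p \<in> F ` BI" by blast
  next
    fix p assume "p \<in> F ` BI"
    then obtain x where x: "x \<in> BI" "p = F x" by blast
    thus "p \<in> Bad V E n" unfolding BI_def Bad_def AC_def F_def cp_def by auto
  qed
  have "ExpY V E n m = (\<Sum>p\<in>F ` BI. h p)" unfolding ExpY_def BadF h_def M_def ..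
  also have "\<dots> \<le> (\<Sum>x\<in>BI. (h \<circ> F) x)"
    by (rule sum_image_le[OF finBI]) (simp add: h_def nng)
  also have "\<dots> \<le> (\<Sum>x\<in>BI. real n powr K * real n ^ card (fst x ` V \<inter> snd x ` V))"
  proof (rule sum_mono)
    fix x assume x: "x \<in> BI"
    obtain f g where x_eq: "x = (f, g)" by (cases x)
    have f: "f \<in> Inj V n" and g: "g \<in> Inj V n" and ne: "cp V E f \<noteq> cp V E g"
      and sh: "f ` V \<inter> g ` V \<noteq> {}" using x unfolding BI_def x_eq by auto
    define c where "c = card (snd (cp V E f) \<inter> snd (cp V E g))"
    define u where "u = card (snd (cp V E f) \<union> snd (cp V E g))"
    define j where "j = card (f ` V \<inter> g ` V)"
    have ov: "c * v < e * j" unfolding c_def v_def e_def j_def by (rule overlap[OF sb f g ne sh])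
    have fs: "finite (snd (cp V E f))" "finite (snd (cp V E g))" unfolding cp_def using finE by auto
    have "u + c = e + e" unfolding u_def c_def e_def
      using card_Un_Int[OF fs] card_snd_cp[OF VE f] card_snd_cp[OF VE g] by simp
    hence ur: "real u = 2 * real e - real c" by linarith
    have ovr: "real c * real v \<le> real e * real j - 1"
    proof -
      have "c * v + 1 \<le> e * j" using ov by simp
      hence "real (c * v + 1) \<le> real (e * j)" by (simp only: of_nat_le_iff)
      thus ?thesis by simp
    qed
    have mMq: "real m / real M \<le> q"
    proof (cases "M = 0")
      case True thus ?thesis using q0 by simp
    next
      case False thus ?thesis using mq unfolding M_def by (simp add: divide_simps)
    qed
    have "(h \<circ> F) x = gq M m u" unfolding h_def F_def x_eq u_def by simp
    also have "\<dots> \<le> (real m / real M) ^ u" using gq_le_pow[OF mM] unfolding M_def .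
    also have "\<dots> \<le> q ^ u" by (rule power_mono[OF mMq]) simp
    also have "\<dots> = real n powr (real u * (1 / (4 * real e^2) - real v / real e))"
      unfolding qdef v_def e_def using npos by (simp add: powr_power)
    also have "\<dots> \<le> real n powr (real j - 2 * real v - 1 / (2 * real e))"
      using n1 expo_ineq[OF epos ovr _ ur] by (intro powr_mono) auto
    also have "\<dots> = real n powr K * real n ^ j"
      unfolding K_def using npos by (simp add: powr_add[symmetric] powr_realpow[symmetric] algebra_simps)
    finally show "(h \<circ> F) x \<le> real n powr K * real n ^ card (fst x ` V \<inter> snd x ` V)"
      unfolding x_eq j_def by simp
  qed
  also have "\<dots> = real n powr K * (\<Sum>x\<in>BI. real n ^ card (fst x ` V \<inter> snd x ` V))"
    by (simp add: sum_distrib_left)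
  also have "\<dots> \<le> real n powr K * (\<Sum>x\<in>Inj V n \<times> Inj V n. real n ^ card (fst x ` V \<inter> snd x ` V))"
    by (intro mult_left_mono sum_mono2) (auto simp: BI_def finI)
  also have "(\<Sum>x\<in>Inj V n \<times> Inj V n. real n ^ card (fst x ` V \<inter> snd x ` V))
      = (\<Sum>f\<in>Inj V n. \<Sum>g\<in>Inj V n. real n ^ card (f ` V \<inter> g ` V))"
    by (simp add: sum.cartesian_product split_beta)
  also have "\<dots> \<le> (\<Sum>f\<in>Inj V n. ((real v + 1) * real n) ^ v)"
    by (rule sum_mono) (use inner_sum[OF finV] in \<open>simp add: v_def\<close>)
  also have "\<dots> = real (card (Inj V n)) * ((real v + 1) * real n) ^ v" by simp
  also have "\<dots> \<le> real n ^ v * ((real v + 1) * real n) ^ v"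
  proof (rule mult_right_mono)
    have "card (Inj V n) \<le> n ^ v" using card_Inj_le[OF finV] unfolding v_def .
    thus "real (card (Inj V n)) \<le> real n ^ v" by (metis of_nat_le_iff of_nat_power)
  qed simp
  finally have "ExpY V E n m \<le> real n powr K * (real n ^ v * ((real v + 1) * real n) ^ v)"
    using npos by (simp add: mult_left_mono)
  also have "\<dots> = (real v + 1) ^ v * (real n powr K * real n powr (2 * real v))"
  proof -
    have a: "real n ^ v * ((real v + 1) * real n) ^ v = (real v + 1) ^ v * real n ^ (2 * v)"
      by (simp add: power_mult_distrib mult_2 power_add)
    have b: "real n ^ (2 * v) = real n powr (2 * real v)"
      using powr_realpow[OF npos, of "2 * v"] by simp
    show ?thesis unfolding a b by simp
  qed
  also have "real n powr K * real n powr (2 * real v) = real n powr (- 1 / (2 * real e))"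
    unfolding K_def by (simp add: powr_add[symmetric])
  finally show ?thesis unfolding v_def e_def .
qed

lemma ev_powr_ge:
  assumes a: "a > 0"
  shows "eventually (\<lambda>n. real n powr a \<ge> C) sequentially"
proof -
  define B where "B = max 1 (C powr (1 / a))"
  have "eventually (\<lambda>n. real n \<ge> B) sequentially"
    using filterlim_real_sequentially unfolding filterlim_at_top by blast
  thus ?thesis
  proof (rule eventually_mono)
    fix n assume n: "B \<le> real n"
    show "C \<le> real n powr a"
    proof (cases "C > 0")
      case True
      have "C = (C powr (1 / a)) powr a" using True a by (simp add: powr_powr)
      also have "\<dots> \<le> real n powr a"
        using n a unfolding B_def by (intro powr_mono2) auto
      finally show ?thesis .
    next
      case False thus ?thesis by (smt (verit) powr_ge_zero)
    qed
  qed
qed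

lemma tendsto_powr_neg0: "a > 0 \<Longrightarrow> (\<lambda>n. real n powr (- a)) \<longlonglongrightarrow> 0"
  by (rule tendsto_neg_powr) (auto intro: filterlim_real_sequentially)

lemma card_Kn: "card (Kn_edges n) = n choose 2"
  unfolding Kn_edges_def using n_subsets[of "{..<n}" 2] by simp

lemma card_Kn_real: "real (card (Kn_edges n)) = real n * (real n - 1) / 2"
proof (cases n)
  case 0 thus ?thesis by (simp add: card_Kn)
next
  case (Suc k)
  have "n choose 2 = n * (n - 1) div 2" by (rule choose_two)
  moreover have "even (n * (n - 1))" by (cases "even n") auto
  ultimately have "real (n choose 2) = real (n * (n - 1)) / 2"
    by (simp add: real_of_nat_div)
  thus ?thesis using Suc by (simp add: card_Kn of_nat_diff algebra_simps)
qed


definition eta :: "'a set set \<Rightarrow> real" where "eta E = 1 / (4 * real (card E)^2)"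
definition qq :: "'a set \<Rightarrow> 'a set set \<Rightarrow> nat \<Rightarrow> real" where
  "qq V E n = real n powr (eta E - real (card V) / real (card E))"
definition mm :: "'a set \<Rightarrow> 'a set set \<Rightarrow> nat \<Rightarrow> nat" where
  "mm V E n = nat \<lfloor>qq V E n * real (card (Kn_edges n))\<rfloor>"

lemma basic_VE:
  assumes sb: "strictly_balanced V E" and Ene: "E \<noteq> {}"
  shows "real (card E) \<ge> 1" "real (card V) \<ge> 1" "real (card V) \<le> 2 * real (card E)"
    "eta E < real (card V) / real (card E)" "eta E > 0"
proof -
  have finE: "finite E" using sb_finiteE[OF sb] .
  have finV: "finite V" using sb_finite[OF sb] .
  show e1: "real (card E) \<ge> 1" using finE Ene by (simp add: Suc_le_eq card_gt_0_iff)
  show v1: "real (card V) \<ge> 1" using finV sb_ne[OF sb] by (simp add: Suc_le_eq card_gt_0_iff)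
  show "real (card V) \<le> 2 * real (card E)" using sb_vle2e[OF sb Ene] by linarith
  have "eta E < 1 / real (card E)" unfolding eta_def using e1
    by (simp add: divide_simps power2_eq_square)
  moreover have "1 / real (card E) \<le> real (card V) / real (card E)"
    using e1 v1 by (simp add: divide_simps)
  ultimately show "eta E < real (card V) / real (card E)" by linarith
  show "eta E > 0" unfolding eta_def using e1 by simp
qed


lemma mm_props:
  assumes sb: "strictly_balanced V E" and Ene: "E \<noteq> {}" and n1: "n \<ge> 1"
  shows "qq V E n \<ge> 0" "qq V E n \<le> 1" "real (mm V E n) \<le> qq V E n * real (card (Kn_edges n))"
    "mm V E n \<le> card (Kn_edges n)" "real (mm V E n) \<ge> qq V E n * real (card (Kn_edges n)) - 1"
proof -
  note b = basic_VE[OF sb Ene]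
  show q0: "qq V E n \<ge> 0" unfolding qq_def by simp
  have "real n powr (eta E - real (card V) / real (card E)) \<le> real n powr 0"
    using n1 b(4) by (intro powr_mono) auto
  thus q1: "qq V E n \<le> 1" unfolding qq_def using n1 by simp
  have x0: "qq V E n * real (card (Kn_edges n)) \<ge> 0" using q0 by simp
  show m1: "real (mm V E n) \<le> qq V E n * real (card (Kn_edges n))"
    unfolding mm_def using x0 by linarith
  also have "\<dots> \<le> real (card (Kn_edges n))" using q1 q0 by (simp add: mult_left_le_one_le mult_le_cancel_right1)
  finally show "mm V E n \<le> card (Kn_edges n)" by simp
  show "real (mm V E n) \<ge> qq V E n * real (card (Kn_edges n)) - 1"
    unfolding mm_def using x0 by linarith
qed

lemma X_lower:
  assumes sb: "strictly_balanced V E" and Ene: "E \<noteq> {}" and n2: "n \<ge> 2"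
    and nv: "real n \<ge> 2 * real (card V)"
    and neta: "real n powr eta E \<ge> 8 * (real (card E) + 1)"
  shows "ExpX V E n (mm V E n) \<ge>
     real n powr (1 / (4 * real (card E))) / (2 ^ card V * real (card V) ^ card V * 2 ^ card E)"
proof -
  note b = basic_VE[OF sb Ene]
  note mp = mm_props[OF sb Ene, of n]
  define v where "v = card V"
  define e where "e = card E"
  define q where "q = qq V E n"
  define m where "m = mm V E n"
  define M where "M = card (Kn_edges n)"
  have npos: "real n > 0" using n2 by simp
  have q0: "q \<ge> 0" and mM: "m \<le> M" and mq: "real m \<ge> q * real M - 1"
    using mp n2 unfolding q_def m_def M_def by auto
  have Mr: "real M = real n * (real n - 1) / 2" unfolding M_def by (rule card_Kn_real)
  have "real n - 1 \<ge> real n / 2" using n2 by simp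
  hence Mge: "real M \<ge> real n ^ 2 / 4" unfolding Mr power2_eq_square
    using npos by (simp add: divide_simps)
  have qn2: "q * real n ^ 2 \<ge> real n powr eta E"
  proof -
    have "q * real n ^ 2 = real n powr (eta E - real v / real e + 2)"
    proof -
      have "real n ^ 2 = real n powr 2" using powr_realpow[OF npos, of 2] by simp
      thus ?thesis unfolding q_def qq_def v_def e_def by (simp only: powr_add)
    qed
    also have "\<dots> \<ge> real n powr eta E"
    proof (rule powr_mono)
      have "real v / real e \<le> 2" using b unfolding v_def e_def by (simp add: divide_simps)
      thus "eta E \<le> eta E - real v / real e + 2" by simp
    qed (use n2 in simp)
    finally show ?thesis .
  qed
  have qM: "q * real M \<ge> 2 * (real e + 1)"
  proof -
    have "q * real M \<ge> q * (real n ^ 2 / 4)" using Mge q0 by (rule mult_left_mono)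
    moreover have "q * (real n ^ 2 / 4) \<ge> real n powr eta E / 4" using qn2 by simp
    ultimately show ?thesis using neta unfolding e_def by linarith
  qed
  have Mpos: "real M > 0" using Mge npos by (smt (verit) zero_less_power divide_pos_pos)
  have "real e \<le> real m" using mq qM by (smt (verit) of_nat_0_le_iff)
  hence em: "e \<le> m" by simp
  have r1: "(real m - real e) / real M \<ge> q / 2"
  proof -
    have "real m - real e \<ge> q * real M / 2" using mq qM by (simp add: field_simps)
    thus ?thesis using Mpos by (simp add: divide_simps)
  qed
  have r2: "real ((n - v) ^ v) \<ge> (real n / 2) ^ v"
  proof -
    have "real (n - v) \<ge> real n / 2" using nv unfolding v_def by (simp add: of_nat_diff)
    hence "(real n / 2) ^ v \<le> real (n - v) ^ v" by (intro power_mono) auto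
    thus ?thesis by simp
  qed
  have vpos: "real v \<ge> 1" using b unfolding v_def by simp
  have "ExpX V E n m \<ge> real ((n - v) ^ v) / real (v ^ v) * ((real m - real e) / real M) ^ e"
    using ExpX_lower[OF sb _ mM[unfolded M_def]] em unfolding v_def e_def M_def by simp
  moreover have "real ((n - v) ^ v) / real (v ^ v) * ((real m - real e) / real M) ^ e
      \<ge> (real n / 2) ^ v / real v ^ v * (q / 2) ^ e"
  proof -
    have a1: "(real n / 2) ^ v / real v ^ v \<le> real ((n - v) ^ v) / real (v ^ v)"
      unfolding of_nat_power[of v v] using r2 vpos by (intro divide_right_mono) auto
    have a2: "(q / 2) ^ e \<le> ((real m - real e) / real M) ^ e"
      by (rule power_mono) (use r1 q0 in auto)
    show ?thesis using a1 a2 q0 by (intro mult_mono) auto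
  qed
  moreover have "(real n / 2) ^ v / real v ^ v * (q / 2) ^ e
      = (real n ^ v * q ^ e) / (2 ^ v * real v ^ v * 2 ^ e)"
    by (simp add: power_divide)
  moreover have "real n ^ v * q ^ e = real n powr (1 / (4 * real e))"
  proof -
    have "real n ^ v * q ^ e = real n powr (real v + real e * (eta E - real v / real e))"
    proof -
      have h1: "real n ^ v = real n powr real v" using powr_realpow[OF npos, of v] by simp
      have h2: "q ^ e = real n powr (real e * (eta E - real v / real e))"
        unfolding q_def qq_def v_def e_def using npos by (simp add: powr_power)
      show ?thesis unfolding h1 h2 by (simp add: powr_add)
    qed
    also have "real v + real e * (eta E - real v / real e) = 1 / (4 * real e)"
      unfolding eta_def e_def using b by (simp add: field_simps power2_eq_square)
    finally show ?thesis .
  qed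
  ultimately show ?thesis unfolding v_def e_def m_def by simp
qed

lemma final_ineq:
  fixes X Y Yb N P C :: real
  assumes "X \<ge> 2 * N" "N > 0" "X \<ge> 1" "Y \<le> 1" "Y \<le> Yb" "X \<ge> P / C" "P > 0" "C > 0"
  shows "(X + Y) / (X - N)^2 + Y \<le> 8 * C / P + Yb"
proof -
  have Xp: "X > 0" using assms by linarith
  have d: "X - N \<ge> X / 2" using assms by linarith
  have d2: "(X - N)^2 \<ge> (X / 2)^2" using d Xp by (intro power_mono) auto
  have pos: "(X / 2)^2 > 0" using Xp by simp
  have "(X + Y) / (X - N)^2 \<le> (2 * X) / (X - N)^2"
    using assms pos d2 by (intro divide_right_mono) auto
  also have "\<dots> \<le> (2 * X) / (X / 2)^2"
    using Xp pos d2 by (intro divide_left_mono) (auto intro!: mult_pos_pos)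
  also have "\<dots> = 8 / X" using Xp by (simp add: power2_eq_square field_simps)
  also have "\<dots> \<le> 8 * C / P"
  proof -
    have "P \<le> X * C" using assms by (simp add: divide_simps)
    thus ?thesis using Xp assms by (simp add: divide_simps mult.commute)
  qed
  finally show ?thesis using assms by linarith
qed

lemma empty_case:
  assumes sb: "strictly_balanced V E" and E0: "E = {}" and nN: "n \<ge> N + 1"
  shows "measure_pmf.prob (graph_process n) {xs. first_copies_disjoint V E N n xs} = 1"
proof -
  have c1: "card V = 1" using sb_empty[OF sb E0] .
  then obtain a where Va: "V = {a}" by (auto simp: card_Suc_eq)
  have VE: "\<forall>e\<in>E. e \<subseteq> V" using E0 by simp
  have finV: "finite V" using Va by simp
  have all: "\<And>G. copies V E n G = AC V E n"
    unfolding copies_eq[OF VE] AC_def cp_def using E0 by auto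
  have cardAC: "N \<le> card (AC V E n)"
    using card_Inj_ge[OF finV, of n] AC_card_ge[OF finV, of n E] c1 nN by simp
  have disj: "\<forall>C\<in>AC V E n. \<forall>D\<in>AC V E n. C \<noteq> D \<longrightarrow> fst C \<inter> fst D = {}"
  proof (intro ballI impI)
    fix C D assume C: "C \<in> AC V E n" and D: "D \<in> AC V E n" and ne: "C \<noteq> D"
    obtain f where f: "C = cp V E f" using C unfolding AC_def by blast
    obtain g where g: "D = cp V E g" using D unfolding AC_def by blast
    have "C = ({f a}, {})" "D = ({g a}, {})" unfolding f g cp_def Va E0 by auto
    thus "fst C \<inter> fst D = {}" using ne by auto
  qed
  have good: "\<And>xs. first_copies_disjoint V E N n xs"
    by (rule good_incl[OF VE finV, where m=0]) (simp_all only: all cardAC, rule disj)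
  have "edge_orderings n \<inter> {xs. first_copies_disjoint V E N n xs} = edge_orderings n"
    using good by blast
  thus ?thesis unfolding prob_eq using Omega_fin Omega_ne by (simp add: card_gt_0_iff)
qed

theorem mainTheorem20:
  fixes V :: "'a set" and E :: "'a set set" and N :: nat
  assumes "strictly_balanced V E" and "N > 0"
  shows "(\<lambda>n. measure_pmf.prob (graph_process n) {xs. first_copies_disjoint V E N n xs})
           \<longlonglongrightarrow> 1"
proof (cases "E = {}")
  case True
  have "eventually (\<lambda>n. measure_pmf.prob (graph_process n) {xs. first_copies_disjoint V E N n xs} = 1) sequentially"
    using eventually_ge_at_top[of "N + 1"] by (rule eventually_mono) (rule empty_case[OF assms(1) True])
  thus ?thesis by (rule tendsto_eventually)
next
  case False
  note sb = assms(1)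
  note b = basic_VE[OF sb False]
  define v where "v = card V"
  define e where "e = card E"
  define C1 where "C1 = (2::real) ^ v * real v ^ v * 2 ^ e"
  define a1 where "a1 = 1 / (4 * real e)"
  define a2 where "a2 = 1 / (2 * real e)"
  define C2 where "C2 = (real v + 1) ^ v"
  define P where "P = (\<lambda>n. measure_pmf.prob (graph_process n) {xs. first_copies_disjoint V E N n xs})"
  define L where "L = (\<lambda>n::nat. 1 - (8 * C1 * real n powr (- a1) + C2 * real n powr (- a2)))"
  have epos: "real e > 0" using b unfolding e_def by simp
  have a1p: "a1 > 0" and a2p: "a2 > 0" unfolding a1_def a2_def using epos by auto
  have C1p: "C1 > 0" unfolding C1_def using b unfolding v_def by simp
  have t1: "(\<lambda>n. real n powr (- a1)) \<longlonglongrightarrow> 0" by (rule tendsto_powr_neg0[OF a1p])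
  have t2: "(\<lambda>n. real n powr (- a2)) \<longlonglongrightarrow> 0" by (rule tendsto_powr_neg0[OF a2p])
  have t2': "(\<lambda>n. C2 * real n powr (- a2)) \<longlonglongrightarrow> 0"
    using tendsto_mult[OF tendsto_const[of C2] t2] by simp
  have Llim: "L \<longlonglongrightarrow> 1"
  proof -
    have "(\<lambda>n. 8 * C1 * real n powr (- a1) + C2 * real n powr (- a2)) \<longlonglongrightarrow> 8 * C1 * 0 + 0"
      by (intro tendsto_add tendsto_mult tendsto_const t1 t2')
    hence "L \<longlonglongrightarrow> 1 - (8 * C1 * 0 + 0)" unfolding L_def by (intro tendsto_diff tendsto_const)
    thus ?thesis by simp
  qed
  have ev1: "eventually (\<lambda>n. n \<ge> max 2 (2 * v)) sequentially" by (rule eventually_ge_at_top)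
  have ev2: "eventually (\<lambda>n. real n powr eta E \<ge> 8 * (real e + 1)) sequentially"
    by (rule ev_powr_ge) (use b in simp)
  have ev3: "eventually (\<lambda>n. real n powr a1 \<ge> C1 * (2 * real N + 1)) sequentially"
    by (rule ev_powr_ge[OF a1p])
  have ev4: "eventually (\<lambda>n. C2 * real n powr (- a2) < 1) sequentially"
    using order_tendstoD(2)[OF t2'] by simp
  have evL: "eventually (\<lambda>n. L n \<le> P n) sequentially"
    using ev1 ev2 ev3 ev4
  proof eventually_elim
    case (elim n)
    have n2: "n \<ge> 2" and nv: "real n \<ge> 2 * real (card V)" using elim(1) unfolding v_def by auto
    have n1: "n \<ge> 1" using n2 by simp
    note mp = mm_props[OF sb False n1]
    define X where "X = ExpX V E n (mm V E n)"
    define Y where "Y = ExpY V E n (mm V E n)"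
    have Xl: "X \<ge> real n powr a1 / C1"
      using X_lower[OF sb False n2 nv elim(2)[unfolded e_def]] unfolding X_def a1_def C1_def v_def e_def .
    have Xl2: "real n powr a1 / C1 \<ge> 2 * real N + 1" using elim(3) C1p by (simp add: divide_simps mult.commute)
    have Yu: "Y \<le> C2 * real n powr (- a2)"
      using ExpY_upper[OF sb False n1 mp(4) mp(1) mp(3)] unfolding Y_def C2_def a2_def v_def e_def qq_def eta_def
      by (simp add: divide_simps)
    have NX: "real N < X" using Xl Xl2 by linarith
    have "P n \<ge> 1 - ((X + Y) / (X - real N)^2 + Y)"
      unfolding P_def X_def Y_def by (rule main_n[OF sb mp(4)]) (use NX X_def in simp)
    moreover have "(X + Y) / (X - real N)^2 + Y \<le> 8 * C1 / (real n powr a1) + C2 * real n powr (- a2)"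
    proof (rule final_ineq)
      show "X \<ge> 2 * real N" "X \<ge> 1" using Xl Xl2 by linarith+
      show "real N > 0" using assms(2) by simp
      show "Y \<le> 1" "Y \<le> C2 * real n powr (- a2)" using Yu elim(4) by linarith+
      show "X \<ge> real n powr a1 / C1" by (rule Xl)
      show "real n powr a1 > 0" using n1 by simp
      show "C1 > 0" by (rule C1p)
    qed
    moreover have "8 * C1 / (real n powr a1) = 8 * C1 * real n powr (- a1)"
      using n1 by (simp add: powr_minus divide_inverse)
    ultimately show ?case unfolding L_def by linarith
  qed
  have evU: "eventually (\<lambda>n. P n \<le> 1) sequentially"
    unfolding P_def by (simp add: measure_pmf.prob_le_1)
  have "P \<longlonglongrightarrow> 1" by (rule tendsto_sandwich[OF evL evU Llim tendsto_const])
  thus ?thesis unfolding P_def .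
qed

end
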